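(* Fourier matrices $F$ and $G$ of the same size, with indexing groups $I_F$ and $I_G$, are permutation equivalent, i.e. $P_{\chi'}\,F\,P_{\chi''}^T=G$ for some bijections $\chi',\chi'':I_G\to I_F$, if and only if the groups $I_F$ and $I_G$ are isomorphic.
   Context: For $n\ge1$, $F_n$ is the $n\times n$ matrix with rows and columns indexed by $\mathbb Z_n$ and entries $e^{2\pi i\,\tilde i\tilde j/n}$. A Fourier matrix is $F=F_{N_1}\otimes\cdots\otimes F_{N_r}$ of size $N=N_1\cdots N_r$, indexed by $I_F=\mathbb Z_{N_1}\times\cdots\times\mathbb Z_{N_r}$ with $F_{i,j}=\prod_x(F_{N_x})_{i_x,j_x}$; group indices correspond to ordinary indices via lexicographic order of $I_F$. For a bijection $\varphi:I_G\to I_F$, $P_\varphi$ is the $N\times N$ permutation matrix (rows indexed by $I_G$, columns by $I_F$) with $(P_\varphi)_{i,\varphi(i)}=1$. *)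

theory Defs
  imports Complex_Main "HOL-Algebra.Group"
begin

text \<open>A Fourier matrix F = F_{N_1} (x) ... (x) F_{N_r} is described by the list Ns = [N_1,...,N_r].
  Its index set I_F = Z_{N_1} x ... x Z_{N_r} is represented by lists of representatives.\<close>

definition fourier_index :: "nat list \<Rightarrow> nat list set" where
  "fourier_index Ns = {i. length i = length Ns \<and> (\<forall>x<length Ns. i ! x < Ns ! x)}"

definition fourier_mat :: "nat list \<Rightarrow> nat list \<Rightarrow> nat list \<Rightarrow> complex" where
  "fourier_mat Ns i j =
     (\<Prod>x<length Ns. exp (2 * of_real pi * \<i> * of_nat (i ! x) * of_nat (j ! x) / of_nat (Ns ! x)))"

definition fourier_group :: "nat list \<Rightarrow> nat list monoid" where
  "fourier_group Ns =
     \<lparr> carrier = fourier_index Ns,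
       mult = (\<lambda>i j. map (\<lambda>x. (i ! x + j ! x) mod (Ns ! x)) [0..<length Ns]),
       one = replicate (length Ns) 0 \<rparr>"

definition perm_mat :: "('a \<Rightarrow> 'b) \<Rightarrow> 'a \<Rightarrow> 'b \<Rightarrow> complex" where
  "perm_mat \<phi> i j = (if j = \<phi> i then 1 else 0)"

definition idx_mult :: "'b set \<Rightarrow> ('a \<Rightarrow> 'b \<Rightarrow> complex) \<Rightarrow> ('b \<Rightarrow> 'c \<Rightarrow> complex) \<Rightarrow> 'a \<Rightarrow> 'c \<Rightarrow> complex" where
  "idx_mult S A B i k = (\<Sum>j\<in>S. A i j * B j k)"

definition idx_transpose :: "('a \<Rightarrow> 'b \<Rightarrow> complex) \<Rightarrow> 'b \<Rightarrow> 'a \<Rightarrow> complex" where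
  "idx_transpose A j i = A i j"

end

theory Submission imports Defs "HOL-Analysis.Complex_Transcendental" begin

lemma gmul_simp: "(i \<otimes>\<^bsub>fourier_group Ns\<^esub> j) = map (\<lambda>x. (i ! x + j ! x) mod (Ns ! x)) [0..<length Ns]"
  by (simp add: fourier_group_def)

lemma carrier_fg[simp]: "carrier (fourier_group Ns) = fourier_index Ns"
  by (simp add: fourier_group_def)

lemma finite_FI: "finite (fourier_index Ns)"
proof -
  have "fourier_index Ns \<subseteq> {xs. set xs \<subseteq> {..<Max (set Ns)+1} \<and> length xs = length Ns}"
  proof
    fix i assume "i \<in> fourier_index Ns"
    then have l: "length i = length Ns" and lt: "\<forall>x<length Ns. i ! x < Ns ! x" by (auto simp: fourier_index_def)
    have "set i \<subseteq> {..<Max (set Ns)+1}"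
    proof
      fix v assume "v \<in> set i"
      then obtain x where x: "x < length i" "i ! x = v" by (auto simp: in_set_conv_nth)
      have "Ns ! x \<le> Max (set Ns)" using x l by (intro Max_ge) auto
      moreover have "v < Ns ! x" using lt x l by auto
      ultimately show "v \<in> {..<Max (set Ns)+1}" by simp
    qed
    then show "i \<in> {xs. set xs \<subseteq> {..<Max (set Ns)+1} \<and> length xs = length Ns}" using l by auto
  qed
  then show ?thesis by (rule finite_subset) (rule finite_lists_length_eq, simp)
qed

lemma gmul_closed:
  assumes "\<forall>x<length Ns. Ns ! x \<ge> 1" "i \<in> fourier_index Ns" "j \<in> fourier_index Ns"
  shows "(i \<otimes>\<^bsub>fourier_group Ns\<^esub> j) \<in> fourier_index Ns"
  using assms by (auto simp: gmul_simp fourier_index_def)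

lemma exp_factor_add:
  assumes "(n::nat) \<ge> 1"
  shows "exp (2 * of_real pi * \<i> * of_nat ((a + b) mod n) * of_nat c / of_nat n) =
         exp (2 * of_real pi * \<i> * of_nat a * of_nat c / of_nat n) * exp (2 * of_real pi * \<i> * of_nat b * of_nat c / of_nat n)"
proof -
  have "exp (2 * of_real pi * \<i> * of_nat ((a + b) mod n) * of_nat c / of_nat n)
      = exp (2 * of_real pi * \<i> * of_nat (((a + b) mod n) * c) / of_nat n)" by (simp add: mult.assoc)
  also have "\<dots> = exp (2 * of_real pi * \<i> * of_nat ((a + b) * c) / of_nat n)"
    using assms by (subst complex_root_unity_eq) (auto simp: mod_mult_left_eq)
  also have "\<dots> = exp (2 * of_real pi * \<i> * of_nat a * of_nat c / of_nat n + 2 * of_real pi * \<i> * of_nat b * of_nat c / of_nat n)"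
    by (simp add: algebra_simps add_divide_distrib)
  finally show ?thesis by (simp add: exp_add)
qed

lemma FM_mult:
  assumes "\<forall>x<length Ns. Ns ! x \<ge> 1"
  shows "fourier_mat Ns ((i \<otimes>\<^bsub>fourier_group Ns\<^esub> i')) j = fourier_mat Ns i j * fourier_mat Ns i' j"
  unfolding fourier_mat_def gmul_simp prod.distrib[symmetric]
  by (rule prod.cong) (use assms exp_factor_add in auto)

lemma FM_sym: "fourier_mat Ns i j = fourier_mat Ns j i"
  unfolding fourier_mat_def by (rule prod.cong) (auto simp: mult_ac)

lemma FM_nonzero: "fourier_mat Ns i j \<noteq> 0"
  unfolding fourier_mat_def by simp

definition ev :: "nat list \<Rightarrow> nat \<Rightarrow> nat list" where
  "ev Ns x = map (\<lambda>y. if y = x then 1 else 0) [0..<length Ns]"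

lemma ev_in: "x < length Ns \<Longrightarrow> Ns ! x \<ge> 2 \<Longrightarrow> \<forall>y<length Ns. Ns ! y \<ge> 1 \<Longrightarrow> ev Ns x \<in> fourier_index Ns"
  by (auto simp: ev_def fourier_index_def)

lemma FM_ev:
  assumes "x < length Ns" "length i = length Ns"
  shows "fourier_mat Ns i (ev Ns x) = exp (2 * of_real pi * \<i> * of_nat (i ! x) / of_nat (Ns ! x))"
proof -
  have "fourier_mat Ns i (ev Ns x) = (\<Prod>y<length Ns. if y = x then exp (2 * of_real pi * \<i> * of_nat (i ! y) / of_nat (Ns ! y)) else 1)"
    unfolding fourier_mat_def by (rule prod.cong) (auto simp: ev_def)
  also have "\<dots> = exp (2 * of_real pi * \<i> * of_nat (i ! x) / of_nat (Ns ! x))"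
    using assms by (subst prod.delta) auto
  finally show ?thesis .
qed

lemma FM_nondeg:
  assumes "\<forall>x<length Ns. Ns ! x \<ge> 1" "i \<in> fourier_index Ns" "i' \<in> fourier_index Ns"
    and eq: "\<forall>j\<in>fourier_index Ns. fourier_mat Ns i j = fourier_mat Ns i' j"
  shows "i = i'"
proof (rule nth_equalityI)
  show "length i = length i'" using assms by (auto simp: fourier_index_def)
  fix x assume "x < length i"
  then have x: "x < length Ns" using assms by (auto simp: fourier_index_def)
  have lt: "i ! x < Ns ! x" "i' ! x < Ns ! x" using assms x by (auto simp: fourier_index_def)
  show "i ! x = i' ! x"
  proof (cases "Ns ! x \<ge> 2")
    case True
    have "fourier_mat Ns i (ev Ns x) = fourier_mat Ns i' (ev Ns x)"
      using eq ev_in[OF x True assms(1)] by auto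
    then have "exp (2 * of_real pi * \<i> * of_nat (i ! x) / of_nat (Ns ! x)) = exp (2 * of_real pi * \<i> * of_nat (i' ! x) / of_nat (Ns ! x))"
      using assms x by (simp add: FM_ev fourier_index_def)
    then have "i ! x mod Ns ! x = i' ! x mod Ns ! x" using True by (subst (asm) complex_root_unity_eq) auto
    then show ?thesis using lt by simp
  next
    case False then show ?thesis using lt by linarith
  qed
qed

lemma matprod:
  assumes "\<chi>' a \<in> S" "\<chi>'' b \<in> S" "finite S"
  shows "idx_mult S (idx_mult S (perm_mat \<chi>') F) (idx_transpose (perm_mat \<chi>'')) a b = F (\<chi>' a) (\<chi>'' b)"
proof -
  have 1: "idx_mult S (perm_mat \<chi>') F a j = F (\<chi>' a) j" for j
  proof -
    have "idx_mult S (perm_mat \<chi>') F a j = (\<Sum>k\<in>S. if k = \<chi>' a then F k j else 0)"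
      unfolding idx_mult_def by (rule sum.cong) (auto simp: perm_mat_def)
    then show ?thesis using assms by (simp add: sum.delta')
  qed
  have "idx_mult S (idx_mult S (perm_mat \<chi>') F) (idx_transpose (perm_mat \<chi>'')) a b
     = (\<Sum>k\<in>S. if k = \<chi>'' b then F (\<chi>' a) k else 0)"
    unfolding idx_mult_def[of S "idx_mult S (perm_mat \<chi>') F"] 1
    by (rule sum.cong) (auto simp: perm_mat_def idx_transpose_def)
  then show ?thesis using assms by (simp add: sum.delta')
qed


lemma char_repr:
  assumes pos: "\<forall>x<length Ns. Ns ! x \<ge> 1"
  and hom: "\<forall>i\<in>fourier_index Ns. \<forall>i'\<in>fourier_index Ns. c (i \<otimes>\<^bsub>fourier_group Ns\<^esub> i') = c i * c i'"
  and nz: "\<forall>i\<in>fourier_index Ns. c i \<noteq> (0::complex)"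
  shows "\<exists>j\<in>fourier_index Ns. \<forall>i\<in>fourier_index Ns. c i = fourier_mat Ns i j"
proof -
  define n where "n = length Ns"
  define z where "z = replicate n (0::nat)"
  have zin: "z \<in> fourier_index Ns" using pos by (auto simp: z_def n_def fourier_index_def)
  have zz: "z \<otimes>\<^bsub>fourier_group Ns\<^esub> z = z"
    by (auto simp: gmul_simp z_def n_def intro!: nth_equalityI)
  have cz: "c z = 1"
  proof -
    have "c z = c z * c z" using hom zin zz by metis
    then show ?thesis using nz zin by auto
  qed
  have A: "c i = (\<Prod>x<n. c (ev Ns x) ^ (i ! x))" if "i \<in> fourier_index Ns" for i
    using that
  proof (induction "sum_list i" arbitrary: i rule: less_induct)
    case less
    have li: "length i = n" and lt: "\<forall>x<n. i ! x < Ns ! x" using less.prems by (auto simp: fourier_index_def n_def)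
    show ?case
    proof (cases "\<forall>x<n. i ! x = 0")
      case True
      then have "i = z" using li by (auto simp: z_def intro!: nth_equalityI)
      then show ?thesis using cz True by simp
    next
      case False
      then obtain x where x: "x < n" "i ! x > 0" by auto
      define i' where "i' = i[x := i ! x - 1]"
      have N2: "Ns ! x \<ge> 2" using x lt by fastforce
      have i'in: "i' \<in> fourier_index Ns" using less.prems x
        by (auto simp: i'_def fourier_index_def nth_list_update n_def)
      have "sum_list i' = sum_list i + (i ! x - 1) - i ! x"
        unfolding i'_def using x li by (subst sum_list_update) auto
      moreover have "i ! x \<le> sum_list i" using x li elem_le_sum_list[of x i] by simp
      ultimately have sl: "sum_list i' < sum_list i" using x by linarith
      have evin: "ev Ns x \<in> fourier_index Ns" using ev_in[OF _ N2 pos] x by (simp add: n_def)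
      have dec: "i = i' \<otimes>\<^bsub>fourier_group Ns\<^esub> ev Ns x"
      proof (rule nth_equalityI)
        show "length i = length (i' \<otimes>\<^bsub>fourier_group Ns\<^esub> ev Ns x)" using li by (simp add: gmul_simp n_def)
        fix y assume "y < length i"
        then show "i ! y = (i' \<otimes>\<^bsub>fourier_group Ns\<^esub> ev Ns x) ! y"
          using li lt x by (auto simp: gmul_simp ev_def i'_def nth_list_update n_def)
      qed
      have "c i = c i' * c (ev Ns x)" using hom i'in evin dec by metis
      also have "\<dots> = (\<Prod>y<n. c (ev Ns y) ^ (i' ! y)) * c (ev Ns x)" using less.hyps[OF sl i'in] by simp
      also have "\<dots> = (\<Prod>y<n. c (ev Ns y) ^ (i' ! y) * (if y = x then c (ev Ns x) else 1))"
        using x by (simp add: prod.distrib prod.delta)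
      also have "\<dots> = (\<Prod>y<n. c (ev Ns y) ^ (i ! y))"
      proof (rule prod.cong)
        fix y assume "y \<in> {..<n}"
        show "c (ev Ns y) ^ (i' ! y) * (if y = x then c (ev Ns x) else 1) = c (ev Ns y) ^ (i ! y)"
          using x li by (cases "y = x") (auto simp: i'_def nth_list_update power_Suc2[symmetric])
      qed simp
      finally show ?thesis .
    qed
  qed
  have C: "c (ev Ns x) ^ (Ns ! x) = 1" if x: "x < n" "Ns ! x \<ge> 2" for x
  proof -
    define v where "v = map (\<lambda>y. if y = x then Ns ! x - 1 else 0) [0..<n]"
    have vin: "v \<in> fourier_index Ns" using pos x by (auto simp: v_def fourier_index_def n_def)
    have evin: "ev Ns x \<in> fourier_index Ns" using ev_in[OF _ x(2) pos] x by (simp add: n_def)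
    have vz: "v \<otimes>\<^bsub>fourier_group Ns\<^esub> ev Ns x = z"
      using x by (auto simp: gmul_simp v_def ev_def z_def n_def intro!: nth_equalityI)
    have "c v = (\<Prod>y<n. if y = x then c (ev Ns x) ^ (Ns ! x - 1) else 1)"
      unfolding A[OF vin] by (rule prod.cong) (auto simp: v_def)
    also have "\<dots> = c (ev Ns x) ^ (Ns ! x - 1)" using x by (simp add: prod.delta)
    finally have "1 = c (ev Ns x) ^ (Ns ! x - 1) * c (ev Ns x)" using hom vin evin vz cz by metis
    then show ?thesis using x by (metis Suc_diff_1 le_trans one_le_numeral power_Suc2 le_eq_less_or_eq less_le_trans zero_less_one)
  qed
  define k where "k x = (SOME k. k < Ns ! x \<and> (Ns ! x \<ge> 2 \<longrightarrow> c (ev Ns x) = exp (2 * of_real pi * \<i> * of_nat k / of_nat (Ns ! x))))" for x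
  have K: "k x < Ns ! x \<and> (Ns ! x \<ge> 2 \<longrightarrow> c (ev Ns x) = exp (2 * of_real pi * \<i> * of_nat (k x) / of_nat (Ns ! x)))"
    if x: "x < n" for x
    unfolding k_def
  proof (rule someI_ex)
    show "\<exists>k. k < Ns ! x \<and> (Ns ! x \<ge> 2 \<longrightarrow> c (ev Ns x) = exp (2 * of_real pi * \<i> * of_nat k / of_nat (Ns ! x)))"
    proof (cases "Ns ! x \<ge> 2")
      case True
      then have "c (ev Ns x) \<in> {z::complex. z ^ (Ns ! x) = 1}" using C x by auto
      then show ?thesis using True by (subst (asm) complex_roots_unity) auto
    next
      case False
      have "0 < Ns ! x" using pos x by (auto simp: n_def)
      then show ?thesis using False by blast
    qed
  qed
  define j where "j = map k [0..<n]"
  have jin: "j \<in> fourier_index Ns" using K by (auto simp: j_def fourier_index_def n_def)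
  show ?thesis
  proof (intro bexI[OF _ jin] ballI)
    fix i assume iin: "i \<in> fourier_index Ns"
    have li: "length i = n" and lt: "\<forall>x<n. i ! x < Ns ! x" using iin by (auto simp: fourier_index_def n_def)
    have "fourier_mat Ns i j = (\<Prod>x<n. c (ev Ns x) ^ (i ! x))"
      unfolding fourier_mat_def n_def[symmetric]
    proof (rule prod.cong)
      fix x assume x: "x \<in> {..<n}"
      show "exp (2 * of_real pi * \<i> * of_nat (i ! x) * of_nat (j ! x) / of_nat (Ns ! x)) = c (ev Ns x) ^ (i ! x)"
      proof (cases "Ns ! x \<ge> 2")
        case True
        have "exp (2 * of_real pi * \<i> * of_nat (i ! x) * of_nat (j ! x) / of_nat (Ns ! x))
            = exp (of_nat (i ! x) * (2 * of_real pi * \<i> * of_nat (k x) / of_nat (Ns ! x)))"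
          using x by (simp add: j_def mult_ac)
        also have "\<dots> = c (ev Ns x) ^ (i ! x)" using K[of x] x True by (simp only: exp_of_nat_mult) auto
        finally show ?thesis .
      next
        case False
        then have "i ! x = 0" using lt x pos by (auto simp: n_def)
        then show ?thesis by simp
      qed
    qed simp
    then show "c i = fourier_mat Ns i j" using A[OF iin] by simp
  qed
qed


lemma iso_inv_fg:
  assumes pos: "\<forall>x<length Ms. Ms ! x \<ge> 1" and h: "\<phi> \<in> iso (fourier_group Ms) (fourier_group Ns)"
  shows "inv_into (fourier_index Ms) \<phi> \<in> iso (fourier_group Ns) (fourier_group Ms)"
proof -
  have hh: "\<phi> \<in> hom (fourier_group Ms) (fourier_group Ns)" "bij_betw \<phi> (fourier_index Ms) (fourier_index Ns)"
    using h by (auto simp: iso_def)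
  then have HG: "bij_betw (inv_into (fourier_index Ms) \<phi>) (fourier_index Ns) (fourier_index Ms)"
    by (simp add: bij_betw_inv_into)
  have *: "\<And>x. x \<in> fourier_index Ns \<Longrightarrow> inv_into (fourier_index Ms) \<phi> x \<in> fourier_index Ms"
    by (meson HG bij_betwE)
  have "inv_into (fourier_index Ms) \<phi> \<in> hom (fourier_group Ns) (fourier_group Ms)"
  proof (rule homI)
    show "inv_into (fourier_index Ms) \<phi> x \<in> carrier (fourier_group Ms)" if "x \<in> carrier (fourier_group Ns)" for x
      using * that by simp
    show "inv_into (fourier_index Ms) \<phi> (x \<otimes>\<^bsub>fourier_group Ns\<^esub> y) = inv_into (fourier_index Ms) \<phi> x \<otimes>\<^bsub>fourier_group Ms\<^esub> inv_into (fourier_index Ms) \<phi> y"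
      if "x \<in> carrier (fourier_group Ns)" "y \<in> carrier (fourier_group Ns)" for x y
    proof (rule inv_into_f_eq)
      show "inj_on \<phi> (fourier_index Ms)"
        using bij_betw_def hh(2) by blast
      show "inv_into (fourier_index Ms) \<phi> x \<otimes>\<^bsub>fourier_group Ms\<^esub> inv_into (fourier_index Ms) \<phi> y \<in> fourier_index Ms"
        using * that pos gmul_closed by simp
      show "\<phi> (inv_into (fourier_index Ms) \<phi> x \<otimes>\<^bsub>fourier_group Ms\<^esub> inv_into (fourier_index Ms) \<phi> y) = x \<otimes>\<^bsub>fourier_group Ns\<^esub> y"
        using hh bij_betw_inv_into_right [of \<phi>] that * unfolding hom_def by simp
    qed
  qed
  then show ?thesis
    by (simp add: iso_def bij_betw_inv_into hh)
qed

theorem corollary4p5: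
  fixes Ns Ms :: "nat list"
  assumes "Ns \<noteq> []" and "Ms \<noteq> []"
    and "\<forall>x<length Ns. Ns ! x \<ge> 1" and "\<forall>x<length Ms. Ms ! x \<ge> 1"
    and "prod_list Ns = prod_list Ms"
  shows "(\<exists>\<chi>' \<chi>''. bij_betw \<chi>' (fourier_index Ms) (fourier_index Ns)
                 \<and> bij_betw \<chi>'' (fourier_index Ms) (fourier_index Ns)
                 \<and> (\<forall>a\<in>fourier_index Ms. \<forall>b\<in>fourier_index Ms.
                      idx_mult (fourier_index Ns)
                        (idx_mult (fourier_index Ns) (perm_mat \<chi>') (fourier_mat Ns))
                        (idx_transpose (perm_mat \<chi>'')) a b
                      = fourier_mat Ms a b))
         \<longleftrightarrow> fourier_group Ns \<cong> fourier_group Ms"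
proof
  note posN = assms(3) and posM = assms(4)
  assume "\<exists>\<chi>' \<chi>''. bij_betw \<chi>' (fourier_index Ms) (fourier_index Ns)
                 \<and> bij_betw \<chi>'' (fourier_index Ms) (fourier_index Ns)
                 \<and> (\<forall>a\<in>fourier_index Ms. \<forall>b\<in>fourier_index Ms.
                      idx_mult (fourier_index Ns)
                        (idx_mult (fourier_index Ns) (perm_mat \<chi>') (fourier_mat Ns))
                        (idx_transpose (perm_mat \<chi>'')) a b
                      = fourier_mat Ms a b)"
  then obtain \<chi>' \<chi>'' where b1: "bij_betw \<chi>' (fourier_index Ms) (fourier_index Ns)"
    and b2: "bij_betw \<chi>'' (fourier_index Ms) (fourier_index Ns)"
    and eq: "\<forall>a\<in>fourier_index Ms. \<forall>b\<in>fourier_index Ms.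
                      idx_mult (fourier_index Ns)
                        (idx_mult (fourier_index Ns) (perm_mat \<chi>') (fourier_mat Ns))
                        (idx_transpose (perm_mat \<chi>'')) a b
                      = fourier_mat Ms a b" by blast
  have E: "fourier_mat Ns (\<chi>' a) (\<chi>'' b) = fourier_mat Ms a b"
    if "a \<in> fourier_index Ms" "b \<in> fourier_index Ms" for a b
    using eq that matprod[of \<chi>' a "fourier_index Ns" \<chi>'' b] b1 b2 finite_FI
    by (metis bij_betwE)
  have "\<chi>' \<in> hom (fourier_group Ms) (fourier_group Ns)"
  proof (rule homI)
    show "\<chi>' x \<in> carrier (fourier_group Ns)" if "x \<in> carrier (fourier_group Ms)" for x
      using that b1 by (simp add: bij_betwE)
    fix a a' assume aa: "a \<in> carrier (fourier_group Ms)" "a' \<in> carrier (fourier_group Ms)"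
    then have aa': "a \<in> fourier_index Ms" "a' \<in> fourier_index Ms" by auto
    have c1: "\<chi>' a \<in> fourier_index Ns" "\<chi>' a' \<in> fourier_index Ns" using aa' b1 by (auto simp: bij_betwE)
    have c2: "a \<otimes>\<^bsub>fourier_group Ms\<^esub> a' \<in> fourier_index Ms" using gmul_closed[OF posM aa'] .
    show "\<chi>' (a \<otimes>\<^bsub>fourier_group Ms\<^esub> a') = \<chi>' a \<otimes>\<^bsub>fourier_group Ns\<^esub> \<chi>' a'"
    proof (rule FM_nondeg[OF posN])
      show "\<chi>' (a \<otimes>\<^bsub>fourier_group Ms\<^esub> a') \<in> fourier_index Ns" using c2 b1 by (simp add: bij_betwE)
      show "\<chi>' a \<otimes>\<^bsub>fourier_group Ns\<^esub> \<chi>' a' \<in> fourier_index Ns" using gmul_closed[OF posN c1] .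
      show "\<forall>j\<in>fourier_index Ns. fourier_mat Ns (\<chi>' (a \<otimes>\<^bsub>fourier_group Ms\<^esub> a')) j =
            fourier_mat Ns (\<chi>' a \<otimes>\<^bsub>fourier_group Ns\<^esub> \<chi>' a') j"
      proof
        fix j assume "j \<in> fourier_index Ns"
        then obtain b where b: "b \<in> fourier_index Ms" "j = \<chi>'' b" using b2
          by (metis bij_betw_def imageE)
        have "fourier_mat Ns (\<chi>' (a \<otimes>\<^bsub>fourier_group Ms\<^esub> a')) j = fourier_mat Ms (a \<otimes>\<^bsub>fourier_group Ms\<^esub> a') b"
          using E c2 b by simp
        also have "\<dots> = fourier_mat Ms a b * fourier_mat Ms a' b" using FM_mult[OF posM] .
        also have "\<dots> = fourier_mat Ns (\<chi>' a) j * fourier_mat Ns (\<chi>' a') j" using E aa' b by simp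
        also have "\<dots> = fourier_mat Ns (\<chi>' a \<otimes>\<^bsub>fourier_group Ns\<^esub> \<chi>' a') j" using FM_mult[OF posN] by simp
        finally show "fourier_mat Ns (\<chi>' (a \<otimes>\<^bsub>fourier_group Ms\<^esub> a')) j =
            fourier_mat Ns (\<chi>' a \<otimes>\<^bsub>fourier_group Ns\<^esub> \<chi>' a') j" .
      qed
    qed
  qed
  then have "\<chi>' \<in> iso (fourier_group Ms) (fourier_group Ns)" using b1 by (simp add: iso_def)
  then show "fourier_group Ns \<cong> fourier_group Ms" using iso_inv_fg[OF posM] is_isoI by blast
next
  note posN = assms(3) and posM = assms(4)
  assume "fourier_group Ns \<cong> fourier_group Ms"
  then obtain \<psi> where psi: "\<psi> \<in> iso (fourier_group Ns) (fourier_group Ms)" by (auto simp: is_iso_def)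
  have psib: "bij_betw \<psi> (fourier_index Ns) (fourier_index Ms)" and psih: "\<psi> \<in> hom (fourier_group Ns) (fourier_group Ms)"
    using psi by (auto simp: iso_def)
  define h where "h = inv_into (fourier_index Ns) \<psi>"
  have hiso: "h \<in> iso (fourier_group Ms) (fourier_group Ns)" unfolding h_def using iso_inv_fg[OF posN psi] .
  have hb: "bij_betw h (fourier_index Ms) (fourier_index Ns)" using hiso by (auto simp: iso_def)
  have psih_eq: "\<psi> (h a) = a" if "a \<in> fourier_index Ms" for a
    unfolding h_def using psib that by (simp add: bij_betw_inv_into_right)
  have psi_in: "\<psi> i \<in> fourier_index Ms" if "i \<in> fourier_index Ns" for i using psib that by (simp add: bij_betwE)
  have ex: "\<exists>j. j \<in> fourier_index Ns \<and> (\<forall>i\<in>fourier_index Ns. fourier_mat Ms (\<psi> i) b = fourier_mat Ns i j)"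
    if b: "b \<in> fourier_index Ms" for b
  proof -
    have "\<exists>j\<in>fourier_index Ns. \<forall>i\<in>fourier_index Ns. fourier_mat Ms (\<psi> i) b = fourier_mat Ns i j"
    proof (rule char_repr[OF posN])
      show "\<forall>i\<in>fourier_index Ns. \<forall>i'\<in>fourier_index Ns. fourier_mat Ms (\<psi> (i \<otimes>\<^bsub>fourier_group Ns\<^esub> i')) b =
        fourier_mat Ms (\<psi> i) b * fourier_mat Ms (\<psi> i') b"
        using psih FM_mult[OF posM] by (simp add: hom_def)
      show "\<forall>i\<in>fourier_index Ns. fourier_mat Ms (\<psi> i) b \<noteq> 0" using FM_nonzero by blast
    qed
    then show ?thesis by blast
  qed
  define \<chi>'' where "\<chi>'' b = (SOME j. j \<in> fourier_index Ns \<and> (\<forall>i\<in>fourier_index Ns. fourier_mat Ms (\<psi> i) b = fourier_mat Ns i j))" for b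
  have X: "\<chi>'' b \<in> fourier_index Ns \<and> (\<forall>i\<in>fourier_index Ns. fourier_mat Ms (\<psi> i) b = fourier_mat Ns i (\<chi>'' b))"
    if "b \<in> fourier_index Ms" for b
    unfolding \<chi>''_def by (rule someI_ex[OF ex[OF that]])
  have E: "fourier_mat Ns (h a) (\<chi>'' b) = fourier_mat Ms a b" if "a \<in> fourier_index Ms" "b \<in> fourier_index Ms" for a b
  proof -
    have "h a \<in> fourier_index Ns" using hb that by (simp add: bij_betwE)
    then show ?thesis using X[OF that(2)] psih_eq[OF that(1)] by metis
  qed
  have inj: "inj_on \<chi>'' (fourier_index Ms)"
  proof (rule inj_onI)
    fix b b' assume bb: "b \<in> fourier_index Ms" "b' \<in> fourier_index Ms" "\<chi>'' b = \<chi>'' b'"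
    show "b = b'"
    proof (rule FM_nondeg[OF posM bb(1,2)], rule ballI)
      fix a assume a: "a \<in> fourier_index Ms"
      have "fourier_mat Ms b a = fourier_mat Ms a b" by (rule FM_sym)
      also have "\<dots> = fourier_mat Ns (h a) (\<chi>'' b)" using E[OF a bb(1)] by simp
      also have "\<dots> = fourier_mat Ns (h a) (\<chi>'' b')" using bb by simp
      also have "\<dots> = fourier_mat Ms a b'" using E[OF a bb(2)] by simp
      also have "\<dots> = fourier_mat Ms b' a" by (rule FM_sym)
      finally show "fourier_mat Ms b a = fourier_mat Ms b' a" .
    qed
  qed
  have sub: "\<chi>'' ` fourier_index Ms \<subseteq> fourier_index Ns" using X by auto
  have "card (\<chi>'' ` fourier_index Ms) = card (fourier_index Ns)"
    using card_image[OF inj] bij_betw_same_card[OF psib] by simp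
  then have "\<chi>'' ` fourier_index Ms = fourier_index Ns"
    using card_subset_eq[OF finite_FI sub] by simp
  then have b2: "bij_betw \<chi>'' (fourier_index Ms) (fourier_index Ns)" using inj by (simp add: bij_betw_def)
  show "\<exists>\<chi>' \<chi>''. bij_betw \<chi>' (fourier_index Ms) (fourier_index Ns)
                 \<and> bij_betw \<chi>'' (fourier_index Ms) (fourier_index Ns)
                 \<and> (\<forall>a\<in>fourier_index Ms. \<forall>b\<in>fourier_index Ms.
                      idx_mult (fourier_index Ns)
                        (idx_mult (fourier_index Ns) (perm_mat \<chi>') (fourier_mat Ns))
                        (idx_transpose (perm_mat \<chi>'')) a b
                      = fourier_mat Ms a b)"
  proof (intro exI conjI ballI)
    show "bij_betw h (fourier_index Ms) (fourier_index Ns)" by (rule hb)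
    show "bij_betw \<chi>'' (fourier_index Ms) (fourier_index Ns)" by (rule b2)
    fix a b assume ab: "a \<in> fourier_index Ms" "b \<in> fourier_index Ms"
    have "h a \<in> fourier_index Ns" "\<chi>'' b \<in> fourier_index Ns" using hb b2 ab by (auto simp: bij_betwE)
    then show "idx_mult (fourier_index Ns)
                        (idx_mult (fourier_index Ns) (perm_mat h) (fourier_mat Ns))
                        (idx_transpose (perm_mat \<chi>'')) a b
                      = fourier_mat Ms a b"
      using matprod[of h a "fourier_index Ns" \<chi>'' b "fourier_mat Ns"] finite_FI E ab by simp
  qed
qed

end
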